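(* Let $(W,S)$ be a Coxeter system, $w\in W\setminus\{1\}$ and $k\in I$ with $k\notin D_R(w)$. If $D_R(ws_k)=\{k\}$, then $$\mathrm{Annex}(ws_k)=\mathrm{Annex}(w)\cdot W_{I\setminus\{k\}}=\{xy: x\in\mathrm{Annex}(w),\ y\in W_{I\setminus\{k\}}\}.$$
   Context: $(W,S)$ a Coxeter system with $S=\{s_i:i\in I\}$; $\ell$ the length; $\le$ the Bruhat order; $D_R(w)=\{i\in I:\ell(ws_i)<\ell(w)\}$ is the right descent set; $W_{J}=\langle s_i:i\in J\rangle$ for $J\subseteq I$. $\mathrm{Annex}(w)=\{y\in W: w\not\le y\}$. *)

theory Defs
  imports "HOL-Algebra.Algebra"
begin

text \<open>A Coxeter system is encoded as a group G together with a family of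
generators s indexed by a set I (so S = s ` I).  It is a Coxeter system iff
G is presented by the generators s i subject to the relations
(s i s j)^(m i j) = 1, where m i j is the order of s i s j in G
(m i j = 0 encodes infinite order, i.e. no relation).\<close>

definition word_eval :: "('a, 'b) monoid_scheme \<Rightarrow> ('i \<Rightarrow> 'a) \<Rightarrow> 'i list \<Rightarrow> 'a" where
  "word_eval G s ws = foldr (\<lambda>i x. s i \<otimes>\<^bsub>G\<^esub> x) ws \<one>\<^bsub>G\<^esub>"

definition cox_m :: "('a, 'b) monoid_scheme \<Rightarrow> ('i \<Rightarrow> 'a) \<Rightarrow> 'i \<Rightarrow> 'i \<Rightarrow> nat" where
  "cox_m G s i j = group.ord G (s i \<otimes>\<^bsub>G\<^esub> s j)"

fun alt_word :: "'i \<Rightarrow> 'i \<Rightarrow> nat \<Rightarrow> 'i list" where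
  "alt_word i j 0 = []"
| "alt_word i j (Suc n) = i # j # alt_word i j n"

inductive cox_equiv :: "('a, 'b) monoid_scheme \<Rightarrow> 'i set \<Rightarrow> ('i \<Rightarrow> 'a) \<Rightarrow> 'i list \<Rightarrow> 'i list \<Rightarrow> bool"
  for G I s where
  rel: "\<lbrakk>i \<in> I; j \<in> I; cox_m G s i j > 0\<rbrakk> \<Longrightarrow> cox_equiv G I s (alt_word i j (cox_m G s i j)) []"
| refl: "cox_equiv G I s u u"
| sym: "cox_equiv G I s u v \<Longrightarrow> cox_equiv G I s v u"
| trans: "cox_equiv G I s u v \<Longrightarrow> cox_equiv G I s v w \<Longrightarrow> cox_equiv G I s u w"
| cong: "cox_equiv G I s u v \<Longrightarrow> cox_equiv G I s (a @ u @ b) (a @ v @ b)"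

definition coxeter_system :: "('a, 'b) monoid_scheme \<Rightarrow> 'i set \<Rightarrow> ('i \<Rightarrow> 'a) \<Rightarrow> bool" where
  "coxeter_system G I s \<longleftrightarrow>
     group G \<and> s ` I \<subseteq> carrier G \<and> inj_on s I \<and>
     (\<forall>i\<in>I. s i \<noteq> \<one>\<^bsub>G\<^esub> \<and> s i \<otimes>\<^bsub>G\<^esub> s i = \<one>\<^bsub>G\<^esub>) \<and>
     carrier G = word_eval G s ` lists I \<and>
     (\<forall>ws\<in>lists I. word_eval G s ws = \<one>\<^bsub>G\<^esub> \<longrightarrow> cox_equiv G I s ws [])"

definition cox_length :: "('a, 'b) monoid_scheme \<Rightarrow> 'i set \<Rightarrow> ('i \<Rightarrow> 'a) \<Rightarrow> 'a \<Rightarrow> nat" where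
  "cox_length G I s w = (LEAST n. \<exists>ws\<in>lists I. length ws = n \<and> word_eval G s ws = w)"

definition reflections :: "('a, 'b) monoid_scheme \<Rightarrow> 'i set \<Rightarrow> ('i \<Rightarrow> 'a) \<Rightarrow> 'a set" where
  "reflections G I s = {g \<otimes>\<^bsub>G\<^esub> s i \<otimes>\<^bsub>G\<^esub> inv\<^bsub>G\<^esub> g | g i. g \<in> carrier G \<and> i \<in> I}"

definition bruhat_step :: "('a, 'b) monoid_scheme \<Rightarrow> 'i set \<Rightarrow> ('i \<Rightarrow> 'a) \<Rightarrow> 'a \<Rightarrow> 'a \<Rightarrow> bool" where
  "bruhat_step G I s u v \<longleftrightarrow> u \<in> carrier G \<and>
     (\<exists>t\<in>reflections G I s. v = u \<otimes>\<^bsub>G\<^esub> t \<and> cox_length G I s u < cox_length G I s v)"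

definition bruhat_le :: "('a, 'b) monoid_scheme \<Rightarrow> 'i set \<Rightarrow> ('i \<Rightarrow> 'a) \<Rightarrow> 'a \<Rightarrow> 'a \<Rightarrow> bool" where
  "bruhat_le G I s u v \<longleftrightarrow> u \<in> carrier G \<and> v \<in> carrier G \<and> (bruhat_step G I s)\<^sup>*\<^sup>* u v"

definition right_descent :: "('a, 'b) monoid_scheme \<Rightarrow> 'i set \<Rightarrow> ('i \<Rightarrow> 'a) \<Rightarrow> 'a \<Rightarrow> 'i set" where
  "right_descent G I s w = {i \<in> I. cox_length G I s (w \<otimes>\<^bsub>G\<^esub> s i) < cox_length G I s w}"

definition parabolic :: "('a, 'b) monoid_scheme \<Rightarrow> ('i \<Rightarrow> 'a) \<Rightarrow> 'i set \<Rightarrow> 'a set" where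
  "parabolic G s J = generate G (s ` J)"

definition annex :: "('a, 'b) monoid_scheme \<Rightarrow> 'i set \<Rightarrow> ('i \<Rightarrow> 'a) \<Rightarrow> 'a \<Rightarrow> 'a set" where
  "annex G I s w = {y \<in> carrier G. \<not> bruhat_le G I s w y}"

end

theory Submission
  imports Defs
begin

locale coxsys = group +
  fixes I :: "'i set" and s :: "'i \<Rightarrow> 'a"
  assumes cs: "coxeter_system G I s"
begin

abbreviation ev where "ev \<equiv> word_eval G s"
abbreviation len where "len \<equiv> cox_length G I s"

lemma s_carr[simp]: "i \<in> I \<Longrightarrow> s i \<in> carrier G"
  using cs unfolding coxeter_system_def by auto
lemma s_sq[simp]: "i \<in> I \<Longrightarrow> s i \<otimes> s i = \<one>"
  using cs unfolding coxeter_system_def by auto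
lemma s_inv[simp]: "i \<in> I \<Longrightarrow> inv (s i) = s i"
  by (simp add: inv_equality)
lemma carr_ev: "carrier G = ev ` lists I"
  using cs unfolding coxeter_system_def by auto
lemma pres: "ws \<in> lists I \<Longrightarrow> ev ws = \<one> \<Longrightarrow> cox_equiv G I s ws []"
  using cs unfolding coxeter_system_def by auto

lemma cancel_l[simp]: "g \<in> carrier G \<Longrightarrow> x \<in> carrier G \<Longrightarrow> inv g \<otimes> (g \<otimes> x) = x"
  by (simp add: m_assoc[symmetric])
lemma cancel_l2[simp]: "g \<in> carrier G \<Longrightarrow> x \<in> carrier G \<Longrightarrow> g \<otimes> (inv g \<otimes> x) = x"
  by (simp add: m_assoc[symmetric])
lemma cancel_s[simp]: "i \<in> I \<Longrightarrow> x \<in> carrier G \<Longrightarrow> s i \<otimes> (s i \<otimes> x) = x"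
  by (simp add: m_assoc[symmetric])

lemma ev_Nil[simp]: "ev [] = \<one>" by (simp add: word_eval_def)
lemma ev_Cons[simp]: "ev (i # u) = s i \<otimes> ev u" by (simp add: word_eval_def)
lemma ev_carr[simp]: "u \<in> lists I \<Longrightarrow> ev u \<in> carrier G"
  by (induction u) auto
lemma ev_append: "u \<in> lists I \<Longrightarrow> v \<in> lists I \<Longrightarrow> ev (u @ v) = ev u \<otimes> ev v"
  by (induction u) (auto simp: m_assoc)
lemma ev_rev: "u \<in> lists I \<Longrightarrow> ev (rev u) = inv (ev u)"
  by (induction u) (auto simp: ev_append inv_mult_group in_lists_conv_set)
lemma ev_exists: "w \<in> carrier G \<Longrightarrow> \<exists>u\<in>lists I. ev u = w"
  using carr_ev by auto

fun ccnt :: "'i list \<Rightarrow> 'a \<Rightarrow> nat" where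
  "ccnt [] t = 0"
| "ccnt (i # u) t = ccnt u t + (if t = inv (ev u) \<otimes> s i \<otimes> ev u then 1 else 0)"

lemma conj_iff:
  assumes "E \<in> carrier G" "t \<in> carrier G" "a \<in> carrier G"
  shows "(t = inv E \<otimes> a \<otimes> E) = (E \<otimes> t \<otimes> inv E = a)"
  using assms by (metis inv_closed inv_solve_left inv_solve_right m_assoc m_closed)

lemma ccnt_append:
  assumes "u \<in> lists I" "v \<in> lists I" "t \<in> carrier G"
  shows "ccnt (u @ v) t = ccnt v t + ccnt u (ev v \<otimes> t \<otimes> inv (ev v))"
  using assms(1)
proof (induction u)
  case Nil then show ?case by simp
next
  case (Cons i u)
  have E: "ev v \<in> carrier G" "ev u \<in> carrier G" "i \<in> I" using Cons assms by auto
  have "(t = inv (ev (u @ v)) \<otimes> s i \<otimes> ev (u @ v)) =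
        (ev v \<otimes> t \<otimes> inv (ev v) = inv (ev u) \<otimes> s i \<otimes> ev u)"
  proof -
    have "inv (ev (u @ v)) \<otimes> s i \<otimes> ev (u @ v) = inv (ev v) \<otimes> (inv (ev u) \<otimes> s i \<otimes> ev u) \<otimes> ev v"
      using E by (simp add: ev_append assms inv_mult_group m_assoc Cons)
    then show ?thesis using conj_iff[of "ev v" t "inv (ev u) \<otimes> s i \<otimes> ev u"] E assms by simp
  qed
  then show ?case using Cons by simp
qed

definition Pinv where
  "Pinv u v \<longleftrightarrow> ev u = ev v \<and> (even (length u) \<longleftrightarrow> even (length v)) \<and>
     (\<forall>t\<in>carrier G. even (ccnt u t) \<longleftrightarrow> even (ccnt v t))"

lemma Pinv_refl: "Pinv u u" by (simp add: Pinv_def)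
lemma Pinv_sym: "Pinv u v \<Longrightarrow> Pinv v u" by (simp add: Pinv_def)
lemma Pinv_trans: "Pinv u v \<Longrightarrow> Pinv v w \<Longrightarrow> Pinv u w" by (simp add: Pinv_def)

lemma Pinv_cong:
  assumes "a \<in> lists I" "u \<in> lists I" "v \<in> lists I" "b \<in> lists I" "Pinv u v"
  shows "Pinv (a @ u @ b) (a @ v @ b)"
proof -
  have e: "ev u = ev v" using assms(5) by (simp add: Pinv_def)
  have "ev (a @ u @ b) = ev (a @ v @ b)" using assms e by (simp add: ev_append)
  moreover have "even (length (a @ u @ b)) = even (length (a @ v @ b))"
    using assms(5) by (simp add: Pinv_def)
  moreover have "even (ccnt (a @ u @ b) t) = even (ccnt (a @ v @ b) t)" if t: "t \<in> carrier G" for t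
  proof -
    have c1: "ev b \<otimes> t \<otimes> inv (ev b) \<in> carrier G" using t assms by simp
    have "ccnt (a @ (u @ b)) t = ccnt b t + ccnt u (ev b \<otimes> t \<otimes> inv (ev b)) + ccnt a (ev (u@b) \<otimes> t \<otimes> inv (ev (u@b)))"
      using assms t by (simp add: ccnt_append)
    moreover have "ccnt (a @ (v @ b)) t = ccnt b t + ccnt v (ev b \<otimes> t \<otimes> inv (ev b)) + ccnt a (ev (v@b) \<otimes> t \<otimes> inv (ev (v@b)))"
      using assms t by (simp add: ccnt_append)
    moreover have "ev (u@b) = ev (v@b)" using assms e by (simp add: ev_append)
    moreover have "even (ccnt u (ev b \<otimes> t \<otimes> inv (ev b))) = even (ccnt v (ev b \<otimes> t \<otimes> inv (ev b)))"
      using assms(5) c1 by (simp add: Pinv_def)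
    ultimately show ?thesis by simp
  qed
  ultimately show ?thesis by (simp add: Pinv_def)
qed

lemma sum_split_nat: "(\<Sum>p<m+n. f p) = (\<Sum>p<m. f p) + (\<Sum>p<n. f (m+p :: nat))"
  by (induction n) (auto simp: add.assoc)

context
  fixes i j assumes ij: "i \<in> I" "j \<in> I"
begin
lemma ev_alt: "ev (alt_word i j n) = (s i \<otimes> s j) [^] n"
proof (induction n)
  case 0 then show ?case by simp
next
  case (Suc n)
  have "(s i \<otimes> s j) [^] Suc n = (s i \<otimes> s j) \<otimes> (s i \<otimes> s j) [^] n"
    using ij by (intro nat_pow_Suc2) simp
  then show ?case using Suc ij by (simp add: m_assoc)
qed
lemma b_g: "s j \<otimes> (s i \<otimes> s j) [^] (n::nat) = (s j \<otimes> s i) [^] n \<otimes> s j"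
proof (induction n)
  case 0 then show ?case using ij by simp
next
  case (Suc n)
  have "s j \<otimes> (s i \<otimes> s j) [^] Suc n = (s j \<otimes> (s i \<otimes> s j) [^] n) \<otimes> (s i \<otimes> s j)"
    using ij by (simp add: m_assoc)
  also have "\<dots> = (s j \<otimes> s i) [^] n \<otimes> (s j \<otimes> s i) \<otimes> s j" using Suc ij by (simp add: m_assoc)
  finally show ?case by simp
qed
lemma inv_g: "inv ((s i \<otimes> s j) [^] (n::nat)) = (s j \<otimes> s i) [^] n"
proof -
  have "inv (s i \<otimes> s j) = s j \<otimes> s i" using ij by (simp add: inv_mult_group)
  then show ?thesis using ij nat_pow_inv[of "s i \<otimes> s j" n] by simp
qed
lemma term1: "inv ((s i \<otimes> s j) [^] (n::nat)) \<otimes> s j \<otimes> (s i \<otimes> s j) [^] n = (s j \<otimes> s i) [^] (2*n) \<otimes> s j"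
proof -
  have "inv ((s i \<otimes> s j) [^] n) \<otimes> s j \<otimes> (s i \<otimes> s j) [^] n = (s j \<otimes> s i) [^] n \<otimes> (s j \<otimes> (s i \<otimes> s j) [^] n)"
    using ij by (simp add: inv_g m_assoc)
  also have "\<dots> = ((s j \<otimes> s i) [^] n \<otimes> (s j \<otimes> s i) [^] n) \<otimes> s j"
    using ij by (simp add: b_g m_assoc)
  also have "\<dots> = (s j \<otimes> s i) [^] (2*n) \<otimes> s j"
    using ij by (simp add: nat_pow_mult mult_2)
  finally show ?thesis .
qed
lemma term2: "inv (s j \<otimes> (s i \<otimes> s j) [^] (n::nat)) \<otimes> s i \<otimes> (s j \<otimes> (s i \<otimes> s j) [^] n) = (s j \<otimes> s i) [^] (Suc (2*n)) \<otimes> s j"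
proof -
  have "inv (s j \<otimes> (s i \<otimes> s j) [^] n) \<otimes> s i \<otimes> (s j \<otimes> (s i \<otimes> s j) [^] n)
      = (s j \<otimes> s i) [^] n \<otimes> (s j \<otimes> s i) \<otimes> ((s j \<otimes> s i) [^] n \<otimes> s j)"
  proof -
    have 1: "inv (s j \<otimes> (s i \<otimes> s j) [^] n) = (s j \<otimes> s i) [^] n \<otimes> s j"
      using ij by (simp add: inv_mult_group inv_g)
    show ?thesis unfolding 1 unfolding b_g using ij by (simp add: m_assoc)
  qed
  also have "\<dots> = ((s j \<otimes> s i) [^] Suc n \<otimes> (s j \<otimes> s i) [^] n) \<otimes> s j"
    using ij by (simp add: m_assoc)
  also have "\<dots> = (s j \<otimes> s i) [^] (Suc (2*n)) \<otimes> s j"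
  proof -
    have "(s j \<otimes> s i) [^] Suc n \<otimes> (s j \<otimes> s i) [^] n = (s j \<otimes> s i) [^] (Suc n + n)"
      using ij by (intro nat_pow_mult) simp
    moreover have "Suc n + n = Suc (2*n)" by simp
    ultimately show ?thesis by metis
  qed
  finally show ?thesis .
qed
lemma ccnt_alt: "ccnt (alt_word i j n) t = (\<Sum>p<2*n. if t = (s j \<otimes> s i) [^] p \<otimes> s j then 1 else 0)"
proof (induction n)
  case 0 then show ?case by simp
next
  case (Suc n)
  have "2 * Suc n = Suc (Suc (2*n))" by simp
  then show ?case using Suc by (simp add: ev_alt term1 term2 del: mult_Suc_right)
qed
lemma ccnt_alt_even:
  assumes "(s i \<otimes> s j) [^] (m::nat) = \<one>"
  shows "even (ccnt (alt_word i j m) t)"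
proof -
  define f where "f p = (if t = (s j \<otimes> s i) [^] (p::nat) \<otimes> s j then 1 else (0::nat))" for p
  have h: "(s j \<otimes> s i) [^] m = \<one>" using assms inv_g[of m] by simp
  have fp: "f (m + p) = f p" for p
    using h ij by (simp add: f_def nat_pow_mult[symmetric])
  have "ccnt (alt_word i j m) t = (\<Sum>p<m+m. f p)" by (simp add: ccnt_alt f_def mult_2)
  also have "\<dots> = 2 * (\<Sum>p<m. f p)" by (simp add: sum_split_nat fp)
  finally show ?thesis by simp
qed
lemma length_alt: "length (alt_word i j n) = 2*n" by (induction n) auto
lemma filter_alt: "filter (\<lambda>x. x \<in> I) (alt_word i j n) = alt_word i j n"
  by (induction n) (auto simp: ij)
lemma alt_lists: "alt_word i j n \<in> lists I" by (induction n) (auto simp: ij)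
lemma Pinv_rel: "Pinv (alt_word i j (cox_m G s i j)) []"
proof -
  have m: "(s i \<otimes> s j) [^] (cox_m G s i j) = \<one>" using ij by (simp add: cox_m_def)
  show ?thesis using ccnt_alt_even[OF m] m unfolding Pinv_def by (simp add: ev_alt length_alt)
qed
end

lemma equiv_Pinv:
  "cox_equiv G I s u v \<Longrightarrow> Pinv (filter (\<lambda>x. x \<in> I) u) (filter (\<lambda>x. x \<in> I) v)"
proof (induction rule: cox_equiv.induct)
  case (rel i j) then show ?case by (simp add: filter_alt Pinv_rel)
next
  case (refl u) then show ?case by (simp add: Pinv_refl)
next
  case (sym u v) then show ?case by (simp add: Pinv_sym)
next
  case (trans u v w) then show ?case by (blast intro: Pinv_trans)
next
  case (cong u v a b)
  have l: "filter (\<lambda>x. x \<in> I) xs \<in> lists I" for xs by auto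
  show ?case using cong Pinv_cong[OF l l l l] by simp
qed

lemma filter_lists: "u \<in> lists I \<Longrightarrow> filter (\<lambda>x. x \<in> I) u = u"
  by (induction u) auto

lemma cancel_ii: "i \<in> I \<Longrightarrow> cox_equiv G I s [i, i] []"
proof -
  assume i: "i \<in> I"
  have "cox_m G s i i = 1" using i by (simp add: cox_m_def ord_eq_1)
  moreover have "cox_equiv G I s (alt_word i i (cox_m G s i i)) []"
    by (rule cox_equiv.rel) (use i \<open>cox_m G s i i = 1\<close> in auto)
  ultimately show ?thesis by (simp add: numeral_2_eq_2)
qed

lemma cancel: "v \<in> lists I \<Longrightarrow> cox_equiv G I s (v @ rev v) []"
proof (induction v)
  case Nil then show ?case by (simp add: cox_equiv.refl)
next
  case (Cons i v)
  have "cox_equiv G I s ([i] @ (v @ rev v) @ [i]) ([i] @ [] @ [i])"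
    using Cons by (intro cox_equiv.cong) auto
  then show ?case using cancel_ii[of i] Cons by (auto intro: cox_equiv.trans)
qed

lemma ev_eq_Pinv:
  assumes u: "u \<in> lists I" and v: "v \<in> lists I" and e: "ev u = ev v"
  shows "Pinv u v"
proof -
  have rv: "rev v \<in> lists I" using v by (auto simp: in_lists_conv_set)
  have "ev (rev v @ u) = \<one>" using u v rv e by (simp add: ev_append ev_rev)
  then have "cox_equiv G I s (rev v @ u) []" using pres u rv by auto
  then have "Pinv (rev v @ u) []" using equiv_Pinv filter_lists u rv by fastforce
  then have 1: "Pinv (v @ (rev v @ u) @ []) (v @ [] @ [])"
    using u v rv by (intro Pinv_cong) auto
  have "Pinv (v @ rev v) []" using cancel[OF v] equiv_Pinv filter_lists v rv by fastforce
  then have 2: "Pinv ([] @ (v @ rev v) @ u) ([] @ [] @ u)"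
    using u v rv by (intro Pinv_cong) auto
  show ?thesis using 1 2 by (auto intro: Pinv_trans Pinv_sym)
qed

abbreviation T where "T \<equiv> reflections G I s"

lemma len_le: "u \<in> lists I \<Longrightarrow> len (ev u) \<le> length u"
  unfolding cox_length_def by (rule Least_le) auto

lemma len_red: "w \<in> carrier G \<Longrightarrow> \<exists>u\<in>lists I. length u = len w \<and> ev u = w"
proof -
  assume "w \<in> carrier G"
  then obtain u where "u \<in> lists I" "ev u = w" using ev_exists by blast
  then have "\<exists>n. \<exists>ws\<in>lists I. length ws = n \<and> ev ws = w" by blast
  from LeastI_ex[OF this] show ?thesis unfolding cox_length_def by blast
qed

lemma len_one[simp]: "len \<one> = 0"
  using len_le[of "[]"] by simp

lemma len_zero: "w \<in> carrier G \<Longrightarrow> len w = 0 \<Longrightarrow> w = \<one>"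
  using len_red by fastforce

lemma T_carr: "t \<in> T \<Longrightarrow> t \<in> carrier G"
  unfolding reflections_def by auto
lemma T_sq: "t \<in> T \<Longrightarrow> t \<otimes> t = \<one>"
proof -
  assume "t \<in> T"
  then obtain g i where g: "g \<in> carrier G" "i \<in> I" "t = g \<otimes> s i \<otimes> inv g"
    unfolding reflections_def by auto
  have "t \<otimes> t = g \<otimes> (s i \<otimes> s i) \<otimes> inv g" using g by (simp add: m_assoc)
  then show ?thesis using g by simp
qed
lemma T_inv: "t \<in> T \<Longrightarrow> inv t = t"
  using T_sq T_carr by (simp add: inv_equality)
lemma s_T: "i \<in> I \<Longrightarrow> s i \<in> T"
  unfolding reflections_def by force
lemma T_conj: "g \<in> carrier G \<Longrightarrow> t \<in> T \<Longrightarrow> g \<otimes> t \<otimes> inv g \<in> T"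
proof -
  assume a: "g \<in> carrier G" "t \<in> T"
  then obtain h i where h: "h \<in> carrier G" "i \<in> I" "t = h \<otimes> s i \<otimes> inv h"
    unfolding reflections_def by auto
  have "g \<otimes> t \<otimes> inv g = (g \<otimes> h) \<otimes> s i \<otimes> inv (g \<otimes> h)"
    using a h by (simp add: m_assoc inv_mult_group)
  then show ?thesis using a h unfolding reflections_def by blast
qed

definition tau where "tau u p = inv (ev (drop (Suc p) u)) \<otimes> s (u ! p) \<otimes> ev (drop (Suc p) u)"
definition del where "del p u = take p u @ drop (Suc p) u"

lemma drop_lists: "u \<in> lists I \<Longrightarrow> drop n u \<in> lists I"
  by (auto simp: in_lists_conv_set dest: in_set_dropD)
lemma take_lists: "u \<in> lists I \<Longrightarrow> take n u \<in> lists I"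
  by (auto simp: in_lists_conv_set dest: in_set_takeD)
lemma del_lists: "u \<in> lists I \<Longrightarrow> del p u \<in> lists I"
  by (simp add: del_def drop_lists take_lists)
lemma length_del: "p < length u \<Longrightarrow> length (del p u) = length u - 1"
  by (simp add: del_def)
lemma nth_I: "u \<in> lists I \<Longrightarrow> p < length u \<Longrightarrow> u ! p \<in> I"
  by (auto simp: in_lists_conv_set)

lemma tau_T: "u \<in> lists I \<Longrightarrow> p < length u \<Longrightarrow> tau u p \<in> T"
proof -
  assume a: "u \<in> lists I" "p < length u"
  let ?g = "inv (ev (drop (Suc p) u))"
  have "?g \<in> carrier G" using a drop_lists by simp
  moreover have "inv ?g = ev (drop (Suc p) u)" using a drop_lists by simp
  ultimately show ?thesis unfolding tau_def reflections_def using nth_I[OF a] by force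
qed

lemma ccnt_pos: "u \<in> lists I \<Longrightarrow> 0 < ccnt u t \<Longrightarrow> \<exists>p<length u. t = tau u p"
proof (induction u)
  case Nil then show ?case by simp
next
  case (Cons i u)
  show ?case
  proof (cases "t = inv (ev u) \<otimes> s i \<otimes> ev u")
    case True
    then show ?thesis by (intro exI[of _ 0]) (simp add: tau_def)
  next
    case False
    then have "0 < ccnt u t" using Cons by simp
    then obtain p where "p < length u" "t = tau u p" using Cons by auto
    then show ?thesis by (intro exI[of _ "Suc p"]) (simp add: tau_def)
  qed
qed

lemma del_ev: "u \<in> lists I \<Longrightarrow> p < length u \<Longrightarrow> ev u = ev (del p u) \<otimes> tau u p"
proof -
  assume a: "u \<in> lists I" "p < length u"
  have u: "u = take p u @ [u ! p] @ drop (Suc p) u" using a id_take_nth_drop by simp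
  have c: "take p u \<in> lists I" "drop (Suc p) u \<in> lists I" "u ! p \<in> I"
    using a take_lists drop_lists nth_I by auto
  have "ev u = ev (take p u) \<otimes> s (u ! p) \<otimes> ev (drop (Suc p) u)"
    by (subst u) (simp add: ev_append c m_assoc)
  moreover have "ev (del p u) \<otimes> tau u p = ev (take p u) \<otimes> s (u ! p) \<otimes> ev (drop (Suc p) u)"
    unfolding del_def tau_def using c by (simp add: ev_append m_assoc r_inv[symmetric] del: r_inv)
  ultimately show ?thesis by simp
qed

lemma parity: "u \<in> lists I \<Longrightarrow> v \<in> lists I \<Longrightarrow> ev u = ev v \<Longrightarrow> even (length u) = even (length v)"
  using ev_eq_Pinv Pinv_def by blast

lemma len_s:
  assumes w: "w \<in> carrier G" and i: "i \<in> I"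
  shows "len (w \<otimes> s i) = len w + 1 \<or> len w = len (w \<otimes> s i) + 1"
proof -
  obtain u where u: "u \<in> lists I" "length u = len w" "ev u = w" using len_red w by blast
  obtain v where v: "v \<in> lists I" "length v = len (w \<otimes> s i)" "ev v = w \<otimes> s i" using len_red[of "w \<otimes> s i"] w i by auto
  have e1: "ev (u @ [i]) = w \<otimes> s i" using u i by (simp add: ev_append)
  have e2: "ev (v @ [i]) = w" using v i w by (simp add: ev_append m_assoc)
  have l1: "len (w \<otimes> s i) \<le> len w + 1" using len_le[of "u @ [i]"] e1 u i by simp
  have l2: "len w \<le> len (w \<otimes> s i) + 1" using len_le[of "v @ [i]"] e2 v i by simp
  have "even (length (u @ [i])) = even (length v)" using parity[of "u @ [i]" v] u v i e1 by simp
  then have "len w \<noteq> len (w \<otimes> s i)" using u v by (metis length_append_singleton even_Suc)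
  then show ?thesis using l1 l2 by linarith
qed

lemma eta_tt:
  assumes t: "t \<in> T" and r: "r \<in> lists I" "ev r = t"
  shows "odd (ccnt r t)"
proof -
  obtain g i where g: "g \<in> carrier G" "i \<in> I" "t = g \<otimes> s i \<otimes> inv g"
    using t unfolding reflections_def by auto
  obtain x where x: "x \<in> lists I" "ev x = g" using ev_exists g by blast
  have rx: "rev x \<in> lists I" using x by (auto simp: in_lists_conv_set)
  have tc: "t \<in> carrier G" using t T_carr by auto
  let ?r = "x @ [i] @ rev x"
  have r': "?r \<in> lists I" using x rx g by auto
  have er: "ev ?r = t" using x rx g by (simp add: ev_append ev_rev m_assoc)
  have E1: "(s i \<otimes> inv g) \<otimes> t \<otimes> inv (s i \<otimes> inv g) = s i"
  proof -
    have "(s i \<otimes> inv g) \<otimes> t \<otimes> inv (s i \<otimes> inv g) = s i \<otimes> (inv g \<otimes> g) \<otimes> s i \<otimes> (inv g \<otimes> g) \<otimes> s i"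
      using g by (simp add: inv_mult_group m_assoc)
    then show ?thesis using g by simp
  qed
  have E2: "inv g \<otimes> t \<otimes> inv (inv g) = s i"
  proof -
    have "inv g \<otimes> t \<otimes> inv (inv g) = (inv g \<otimes> g) \<otimes> s i \<otimes> (inv g \<otimes> g)"
      using g by (simp add: m_assoc)
    then show ?thesis using g by simp
  qed
  have "ccnt ?r t = ccnt ([i] @ rev x) t + ccnt x (s i \<otimes> inv g \<otimes> t \<otimes> inv (s i \<otimes> inv g))"
    using ccnt_append[of x "[i] @ rev x" t] x rx g tc by (simp add: ev_rev m_assoc)
  also have "\<dots> = ccnt (rev x) t + ccnt [i] (inv g \<otimes> t \<otimes> inv (inv g)) + ccnt x (s i)"
    using ccnt_append[of "[i]" "rev x" t] x rx g tc E1 by (simp add: ev_rev m_assoc)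
  also have "\<dots> = ccnt (rev x) t + 1 + ccnt x (s i)" using E2 g by simp
  finally have c1: "ccnt ?r t = ccnt (rev x) t + 1 + ccnt x (s i)" .
  have "Pinv (x @ rev x) []" using cancel[OF x(1)] equiv_Pinv filter_lists x rx by fastforce
  then have "even (ccnt (x @ rev x) t)" using tc unfolding Pinv_def by simp
  moreover have "ccnt (x @ rev x) t = ccnt (rev x) t + ccnt x (inv g \<otimes> t \<otimes> inv (inv g))"
    using ccnt_append[of x "rev x" t] x rx tc by (simp add: ev_rev)
  ultimately have "even (ccnt (rev x) t + ccnt x (s i))" using E2 by simp
  then have "odd (ccnt ?r t)" using c1 by simp
  moreover have "Pinv r ?r" using ev_eq_Pinv r r' er by simp
  ultimately show ?thesis using tc unfolding Pinv_def by auto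
qed

lemma strong_exchange:
  assumes w: "w \<in> carrier G" and t: "t \<in> T" and l: "len (w \<otimes> t) < len w"
    and r: "r \<in> lists I" "ev r = w"
  shows "\<exists>p<length r. w \<otimes> t = ev (del p r)"
proof -
  have tc: "t \<in> carrier G" using t T_carr by auto
  have odd: "odd (ccnt r t)"
  proof (rule ccontr)
    assume ev0: "\<not> odd (ccnt r t)"
    obtain r2 where r2: "r2 \<in> lists I" "length r2 = len (w \<otimes> t)" "ev r2 = w \<otimes> t"
      using len_red[of "w \<otimes> t"] w tc by auto
    obtain rt where rt: "rt \<in> lists I" "ev rt = t" using ev_exists tc by blast
    have "ccnt (r2 @ rt) t = ccnt rt t + ccnt r2 (t \<otimes> t \<otimes> inv t)"
      using ccnt_append r2 rt tc by simp
    moreover have "t \<otimes> t \<otimes> inv t = t" using t T_inv T_sq tc by simp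
    moreover have "ev (r2 @ rt) = w" using r2 rt w tc t T_sq by (simp add: ev_append m_assoc)
    moreover have "odd (ccnt rt t)" using eta_tt t rt by simp
    ultimately have "odd (ccnt r2 t)"
      using ev_eq_Pinv[of "r2 @ rt" r] r2 rt r ev0 tc unfolding Pinv_def by auto
    then obtain p where p: "p < length r2" "t = tau r2 p" using ccnt_pos r2 by (metis odd_pos)
    have "w \<otimes> t = ev (del p r2) \<otimes> t" using del_ev r2 p by simp
    then have "w = ev (del p r2)"
      using w tc del_lists r2 by (metis ev_carr right_cancel)
    then have "len w \<le> length r2 - 1" using len_le[OF del_lists[OF r2(1)], of p] length_del[OF p(1)] by simp
    then show False using l r2 by linarith
  qed
  then obtain p where p: "p < length r" "t = tau r p" using ccnt_pos r by (metis odd_pos)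
  have "w \<otimes> t = ev (del p r) \<otimes> t \<otimes> t" using del_ev[OF r(1) p(1)] r p by simp
  also have "\<dots> = ev (del p r) \<otimes> (t \<otimes> t)" using del_lists[OF r(1)] tc by (simp add: m_assoc)
  finally have "w \<otimes> t = ev (del p r) \<otimes> (t \<otimes> t)" .
  then show ?thesis using p t T_sq del_lists r by auto
qed

abbreviation stp where "stp \<equiv> bruhat_step G I s"
abbreviation ble where "ble \<equiv> bruhat_le G I s"
abbreviation D where "D \<equiv> right_descent G I s"

lemma D_iff: "i \<in> D w \<longleftrightarrow> i \<in> I \<and> len (w \<otimes> s i) < len w"
  by (simp add: right_descent_def)

lemma desc_len: "w \<in> carrier G \<Longrightarrow> i \<in> D w \<Longrightarrow> len (w \<otimes> s i) + 1 = len w"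
  using len_s[of w i] D_iff[of i w] by auto
lemma nondesc_len: "w \<in> carrier G \<Longrightarrow> i \<in> I \<Longrightarrow> i \<notin> D w \<Longrightarrow> len (w \<otimes> s i) = len w + 1"
  using len_s[of w i] D_iff[of i w] by auto

lemma stp_carr: "stp u v \<Longrightarrow> u \<in> carrier G \<and> v \<in> carrier G"
  unfolding bruhat_step_def using T_carr by auto

lemma stp_intro: "u \<in> carrier G \<Longrightarrow> t \<in> T \<Longrightarrow> len u < len (u \<otimes> t) \<Longrightarrow> stp u (u \<otimes> t)"
  unfolding bruhat_step_def by auto

lemma stp_len: "stp u v \<Longrightarrow> len u < len v"
  unfolding bruhat_step_def by auto

lemma rtr_carr: "stp\<^sup>*\<^sup>* u v \<Longrightarrow> u \<in> carrier G \<Longrightarrow> v \<in> carrier G"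
  by (induction rule: rtranclp_induct) (auto dest: stp_carr)

lemma rtr_len: "stp\<^sup>*\<^sup>* u v \<Longrightarrow> u = v \<or> len u < len v"
  by (induction rule: rtranclp_induct) (auto dest: stp_len)

lemma ble_iff: "ble u v \<longleftrightarrow> u \<in> carrier G \<and> stp\<^sup>*\<^sup>* u v"
  unfolding bruhat_le_def using rtr_carr by blast

lemma ble_trans: "ble u v \<Longrightarrow> ble v w \<Longrightarrow> ble u w"
  unfolding ble_iff by auto

lemma ble_refl: "u \<in> carrier G \<Longrightarrow> ble u u"
  unfolding ble_iff by auto

lemma ble_stp: "stp u v \<Longrightarrow> ble u v"
  unfolding ble_iff using stp_carr by auto

lemma ble_one: "ble w \<one> \<Longrightarrow> w = \<one>"
  unfolding ble_iff using rtr_len by fastforce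

lemma SS:
  assumes st: "stp a b" and i: "i \<in> I" "i \<in> D b" "i \<notin> D a"
  shows "a = b \<otimes> s i \<or> stp (a \<otimes> s i) (b \<otimes> s i)"
proof -
  obtain t where t: "t \<in> T" "b = a \<otimes> t" "len a < len b" and a: "a \<in> carrier G"
    using st unfolding bruhat_step_def by auto
  have tc: "t \<in> carrier G" using t T_carr by auto
  have b: "b \<in> carrier G" using a tc t by simp
  have ab: "a = b \<otimes> t" using t a tc T_sq by (simp add: m_assoc)
  obtain r' where r': "r' \<in> lists I" "length r' = len (b \<otimes> s i)" "ev r' = b \<otimes> s i"
    using len_red[of "b \<otimes> s i"] b i by auto
  have r: "r' @ [i] \<in> lists I" "ev (r' @ [i]) = b" using r' i b by (auto simp: ev_append m_assoc)
  have lr: "length (r' @ [i]) = len b" using desc_len[OF b i(2)] r' by simp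
  have "len (b \<otimes> t) < len b" using ab t by simp
  then obtain p where p: "p < length (r' @ [i])" "b \<otimes> t = ev (del p (r' @ [i]))"
    using strong_exchange[OF b t(1) _ r] by blast
  show ?thesis
  proof (cases "p = length r'")
    case True
    then have "del p (r' @ [i]) = r'" by (simp add: del_def)
    then show ?thesis using p ab r' by simp
  next
    case False
    then have pl: "p < length r'" using p by simp
    then have "del p (r' @ [i]) = del p r' @ [i]" by (simp add: del_def)
    then have "a = ev (del p r') \<otimes> s i" using p ab del_lists[OF r'(1)] i by (simp add: ev_append)
    then have as: "a \<otimes> s i = ev (del p r')" using del_lists[OF r'(1)] i by (simp add: m_assoc)
    have "b \<otimes> s i = a \<otimes> s i \<otimes> tau r' p" using del_ev[OF r'(1) pl] r' as by simp
    moreover have "len (a \<otimes> s i) < len (a \<otimes> s i \<otimes> tau r' p)"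
    proof -
      have "len (a \<otimes> s i) \<le> length r' - 1"
        using as len_le[OF del_lists[OF r'(1)], of p] length_del[OF pl] by simp
      then show ?thesis using pl r' as del_ev[OF r'(1) pl] by simp
    qed
    ultimately show ?thesis using stp_intro[of "a \<otimes> s i" "tau r' p"] tau_T[OF r'(1) pl] a i by simp
  qed
qed

lemma conj_s_T: "i \<in> I \<Longrightarrow> t \<in> T \<Longrightarrow> s i \<otimes> t \<otimes> s i \<in> T"
  using T_conj[of "s i" t] by simp

lemma B2:
  assumes "stp\<^sup>*\<^sup>* u x" "u \<in> carrier G" "i \<in> I" "i \<in> D x" "i \<notin> D u"
  shows "ble u (x \<otimes> s i)"
  using assms(1,4)
proof (induction rule: rtranclp_induct)
  case base then show ?case using assms by simp
next
  case (step y x)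
  have yc: "y \<in> carrier G" and xc: "x \<in> carrier G" using step stp_carr by auto
  show ?case
  proof (cases "i \<in> D y")
    case True
    obtain t where t: "t \<in> T" "x = y \<otimes> t" "len y < len x"
      using step(2) unfolding bruhat_step_def by auto
    have tc: "t \<in> carrier G" using t T_carr by auto
    have e: "x \<otimes> s i = (y \<otimes> s i) \<otimes> (s i \<otimes> t \<otimes> s i)" using t yc tc assms(3) by (simp add: m_assoc)
    have "len (y \<otimes> s i) < len (x \<otimes> s i)"
      using desc_len[OF yc True] desc_len[OF xc step(4)] t by simp
    then have "stp (y \<otimes> s i) (x \<otimes> s i)"
      using stp_intro[of "y \<otimes> s i" "s i \<otimes> t \<otimes> s i"] e conj_s_T[OF assms(3) t(1)] yc assms(3) by simp
    then show ?thesis using step(3)[OF True] ble_stp ble_trans by blast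
  next
    case False
    have uy: "ble u y" using step(1) assms(2) ble_iff by simp
    from SS[OF step(2) assms(3) step(4) False] show ?thesis
    proof
      assume "y = x \<otimes> s i" then show ?thesis using uy by simp
    next
      assume st: "stp (y \<otimes> s i) (x \<otimes> s i)"
      have "stp y (y \<otimes> s i)" using stp_intro[OF yc s_T[OF assms(3)]] nondesc_len[OF yc assms(3) False] by simp
      then show ?thesis using uy st ble_stp ble_trans by blast
    qed
  qed
qed

lemma C:
  assumes "stp\<^sup>*\<^sup>* u x" "u \<in> carrier G" "i \<in> I" "i \<in> D x" "i \<notin> D u"
  shows "ble (u \<otimes> s i) x"
  using assms(1,2,5)
proof (induction rule: converse_rtranclp_induct)
  case base then show ?case using assms by simp
next
  case (step u y)
  have yc: "y \<in> carrier G" and uc: "u \<in> carrier G" using step stp_carr by auto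
  have yx: "ble y x" using step(2) yc ble_iff by simp
  show ?case
  proof (cases "i \<in> D y")
    case False
    obtain t where t: "t \<in> T" "y = u \<otimes> t" "len u < len y"
      using step(1) unfolding bruhat_step_def by auto
    have tc: "t \<in> carrier G" using t T_carr by auto
    have e: "y \<otimes> s i = (u \<otimes> s i) \<otimes> (s i \<otimes> t \<otimes> s i)" using t uc tc assms(3) by (simp add: m_assoc)
    have "len (u \<otimes> s i) < len (y \<otimes> s i)"
      using nondesc_len[OF yc assms(3) False] nondesc_len[OF uc assms(3) step(5)] t by simp
    then have "stp (u \<otimes> s i) (y \<otimes> s i)"
      using stp_intro[of "u \<otimes> s i" "s i \<otimes> t \<otimes> s i"] e conj_s_T[OF assms(3) t(1)] uc assms(3) by simp
    then show ?thesis using step(3)[OF yc False] ble_stp ble_trans by blast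
  next
    case True
    from SS[OF step(1) assms(3) True step(5)] show ?thesis
    proof
      assume "u = y \<otimes> s i" then show ?thesis using yx yc assms(3) by (simp add: m_assoc)
    next
      assume st: "stp (u \<otimes> s i) (y \<otimes> s i)"
      have yy: "y \<otimes> s i \<otimes> s i = y" using yc assms(3) by (simp add: m_assoc)
      have "len (y \<otimes> s i) < len (y \<otimes> s i \<otimes> s i)" using yy desc_len[OF yc True] by simp
      then have "stp (y \<otimes> s i) y" using stp_intro[of "y \<otimes> s i" "s i"] yc assms(3) s_T yy by simp
      then show ?thesis using yx st ble_stp ble_trans by blast
    qed
  qed
qed

lemma Zp:
  assumes y: "y \<in> carrier G" and j: "j \<in> I" "j \<notin> D v" and v: "v \<in> carrier G"
  shows "ble v y \<longleftrightarrow> ble v (y \<otimes> s j)"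
proof -
  have fwd: "ble v (x \<otimes> s j)" if x: "x \<in> carrier G" "ble v x" for x
  proof (cases "j \<in> D x")
    case True then show ?thesis using B2[of v x j] x j v ble_iff by simp
  next
    case False
    have "stp x (x \<otimes> s j)" using stp_intro[OF x(1) s_T[OF j(1)]] nondesc_len[OF x(1) j(1) False] by simp
    then show ?thesis using x ble_stp ble_trans by blast
  qed
  show ?thesis
  proof
    assume "ble v y" then show "ble v (y \<otimes> s j)" using fwd y by simp
  next
    assume "ble v (y \<otimes> s j)"
    then have "ble v (y \<otimes> s j \<otimes> s j)" using fwd y j by simp
    then show "ble v y" using y j by (simp add: m_assoc)
  qed
qed

lemma Gen:
  assumes z: "z \<in> generate G (s ` J)" and J: "J \<subseteq> I" and nd: "\<forall>j\<in>J. j \<notin> D v"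
    and v: "v \<in> carrier G"
  shows "\<forall>y\<in>carrier G. ble v y \<longleftrightarrow> ble v (y \<otimes> z)"
  using z
proof (induction rule: generate.induct)
  case one then show ?case by simp
next
  case (incl h) then show ?case using Zp J nd v by auto
next
  case (inv h)
  then obtain j where "j \<in> J" "h = s j" by auto
  then show ?case using Zp J nd v by auto
next
  case (eng h1 h2)
  have sub: "s ` J \<subseteq> carrier G" using J by auto
  have c: "h1 \<in> carrier G" "h2 \<in> carrier G" using eng(1,2) generate_in_carrier[OF sub] by auto
  show ?case
  proof
    fix y assume y: "y \<in> carrier G"
    have "ble v y \<longleftrightarrow> ble v (y \<otimes> h1)" using eng y by simp
    also have "\<dots> \<longleftrightarrow> ble v (y \<otimes> h1 \<otimes> h2)" using eng y c by simp
    finally show "ble v y \<longleftrightarrow> ble v (y \<otimes> (h1 \<otimes> h2))" using y c by (simp add: m_assoc)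
  qed
qed

lemma has_desc:
  assumes x: "x \<in> carrier G" "x \<noteq> \<one>"
  shows "\<exists>i. i \<in> D x"
proof -
  obtain r where r: "r \<in> lists I" "length r = len x" "ev r = x" using len_red x by blast
  have "r \<noteq> []" using r x by auto
  then obtain r0 i where ri: "r = r0 @ [i]" by (metis rev_exhaust)
  have i: "i \<in> I" "r0 \<in> lists I" using r ri by auto
  have "x = ev r0 \<otimes> s i" using r ri i by (simp add: ev_append)
  then have "x \<otimes> s i = ev r0" using i by (simp add: m_assoc)
  then have "len (x \<otimes> s i) < len x" using len_le[OF i(2)] r ri by simp
  then show ?thesis using i D_iff by blast
qed

theorem main:
  assumes w: "w \<in> carrier G" "w \<noteq> \<one>" and k: "k \<in> I" "k \<notin> D w"
    and Dv: "D (w \<otimes> s k) = {k}"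
  shows "annex G I s (w \<otimes> s k) =
     {x \<otimes> y | x y. x \<in> annex G I s w \<and> y \<in> generate G (s ` (I - {k}))}"
proof -
  define v where "v = w \<otimes> s k"
  define WJ where "WJ = generate G (s ` (I - {k}))"
  have vc: "v \<in> carrier G" using v_def w k by simp
  have sub: "s ` (I - {k}) \<subseteq> carrier G" by auto
  have wv: "ble w v"
    using stp_intro[OF w(1) s_T[OF k(1)]] nondesc_len[OF w(1) k] v_def ble_stp by simp
  have nd: "\<forall>j\<in>I - {k}. j \<notin> D v" using Dv v_def by auto
  have G: "\<And>z y. z \<in> WJ \<Longrightarrow> y \<in> carrier G \<Longrightarrow> ble v y \<longleftrightarrow> ble v (y \<otimes> z)"
    using Gen[OF _ _ nd vc] WJ_def by blast
  have "annex G I s v = {x \<otimes> y | x y. x \<in> annex G I s w \<and> y \<in> WJ}"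
  proof (intro equalityI subsetI)
    fix y assume "y \<in> annex G I s v"
    then have y: "y \<in> carrier G" "\<not> ble v y" unfolding annex_def by auto
    have "\<one> \<in> WJ" unfolding WJ_def by (rule generate.one)
    then obtain z where z: "z \<in> WJ" and zmin: "\<forall>z'. z' \<in> WJ \<longrightarrow> len (y \<otimes> z) \<le> len (y \<otimes> z')"
      using ex_has_least_nat[of "\<lambda>z. z \<in> WJ" _ "\<lambda>z. len (y \<otimes> z)"] by blast
    have zc: "z \<in> carrier G" using z generate_in_carrier[OF sub] WJ_def by auto
    define x where "x = y \<otimes> z"
    have xc: "x \<in> carrier G" using x_def y zc by simp
    have nwx: "\<not> ble w x"
    proof
      assume wx: "ble w x"
      have "x \<noteq> \<one>" using wx w ble_one by auto
      then obtain i where i: "i \<in> D x" using has_desc xc by blast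
      have iI: "i \<in> I" using i D_iff by auto
      have "i = k"
      proof (rule ccontr)
        assume "i \<noteq> k"
        then have "z \<otimes> s i \<in> WJ" using z iI unfolding WJ_def by (auto intro: generate.eng generate.incl)
        then have "len (y \<otimes> z) \<le> len (y \<otimes> (z \<otimes> s i))" using zmin by blast
        moreover have "y \<otimes> (z \<otimes> s i) = x \<otimes> s i" using x_def y zc iI by (simp add: m_assoc)
        ultimately show False using i D_iff x_def by auto
      qed
      then have "ble v x" using C[of w x k] wx ble_iff w k i v_def by simp
      moreover have "inv z \<in> WJ" using z generate_m_inv_closed[OF sub] WJ_def by auto
      ultimately have "ble v (x \<otimes> inv z)" using G xc by blast
      moreover have "x \<otimes> inv z = y" using x_def y zc by (simp add: m_assoc)
      ultimately show False using y by simp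
    qed
    have "inv z \<in> WJ" using z generate_m_inv_closed[OF sub] WJ_def by auto
    moreover have "y = x \<otimes> inv z" using x_def y zc by (simp add: m_assoc)
    moreover have "x \<in> annex G I s w" using nwx xc unfolding annex_def by auto
    ultimately show "y \<in> {x \<otimes> y | x y. x \<in> annex G I s w \<and> y \<in> WJ}" by blast
  next
    fix y assume "y \<in> {x \<otimes> y | x y. x \<in> annex G I s w \<and> y \<in> WJ}"
    then obtain x z where xz: "y = x \<otimes> z" "x \<in> annex G I s w" "z \<in> WJ" by blast
    have xc: "x \<in> carrier G" and nwx: "\<not> ble w x" using xz unfolding annex_def by auto
    have zc: "z \<in> carrier G" using xz generate_in_carrier[OF sub] WJ_def by auto
    have "\<not> ble v y"
    proof
      assume "ble v y"
      then have "ble v x" using G[OF xz(3) xc] xz by simp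
      then show False using wv nwx ble_trans by blast
    qed
    then show "y \<in> annex G I s v" using xz xc zc unfolding annex_def by auto
  qed
  then show ?thesis using v_def WJ_def by simp
qed

end

theorem proposition3p14:
  fixes G :: "('a, 'b) monoid_scheme" and I :: "'i set" and s :: "'i \<Rightarrow> 'a"
    and w :: 'a and k :: 'i
  assumes "coxeter_system G I s"
    and "w \<in> carrier G" and "w \<noteq> \<one>\<^bsub>G\<^esub>"
    and "k \<in> I" and "k \<notin> right_descent G I s w"
    and "right_descent G I s (w \<otimes>\<^bsub>G\<^esub> s k) = {k}"
  shows "annex G I s (w \<otimes>\<^bsub>G\<^esub> s k)
           = {x \<otimes>\<^bsub>G\<^esub> y | x y. x \<in> annex G I s w \<and> y \<in> parabolic G s (I - {k})}"
proof -
  have "group G" using assms(1) unfolding coxeter_system_def by simp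
  then interpret coxsys G I s using assms(1) by (simp add: coxsys_def coxsys_axioms_def)
  show ?thesis using main[OF assms(2-6)] unfolding parabolic_def by simp
qed

end
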